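(* Let $k\ge 0$ and suppose $P_k(q)=P_{k,1}(q)\cdots P_{k,r}(q)$ is a factorization of $P_k$ into monic irreducible polynomials in $\mathbb{Z}[q]$, numbered so that $P_{k,1}(\alpha)=0$, where $\alpha$ is the unique root of $P_k$ in $(0,1)$. Then $P_{k,1}(1/\alpha)=0$, and for every $i\ge 2$ all roots of $P_{k,i}$ are roots of unity.
   Context: For $k\ge 0$, $P_{k}(q)=1+\sum_{l=1}^{k+1} q^{4l-4}(q^4-q^3-q^2-q)$, i.e. $P_0=q^4-q^3-q^2-q+1$, $P_k=(q^4+1)P_{k-1}-q^4P_{k-2}$ with $P_1=q^8-q^7-q^6-q^5+q^4-q^3-q^2-q+1$. $P_k$ has exactly one root $\alpha$ in $(0,1)$, and its roots are $\alpha$, $1/\alpha$, and complex numbers of absolute value $1$. *)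

theory Defs
  imports "HOL-Computational_Algebra.Polynomial" "HOL-Computational_Algebra.Polynomial_Factorial" Complex_Main
begin

definition Pk :: "nat \<Rightarrow> int poly" where
  "Pk k = 1 + (\<Sum>l = 1..k+1. monom 1 (4*l - 4) * [:0, -1, -1, -1, 1:])"

end

theory Submission imports Defs "Berlekamp_Zassenhaus.Factor_Bound" begin


lemma poly_linear_prod_zero:
  fixes as :: "'a::idom list"
  shows "poly (\<Prod>a\<leftarrow>as. [:- a, 1:]) x = 0 \<longleftrightarrow> x \<in> set as"
  by (induct as) auto

lemma kronecker:
  fixes f :: "int poly" and z :: complex
  assumes mon: "lead_coeff f = 1"
    and circ: "\<And>w. poly (map_poly of_int f) w = 0 \<Longrightarrow> cmod w = 1"
    and root: "poly (map_poly of_int f) z = 0"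
  shows "\<exists>n>0. z ^ n = 1"
proof -
  define d where "d = degree f"
  define as where "as = complex_roots_int f"
  have fac0: "map_poly of_int f = Polynomial.smult 1 (\<Prod>a\<leftarrow>as. [:- a, 1:])"
    using complex_roots_int(1)[of f] mon by (simp add: as_def)
  hence fac: "map_poly of_int f = (\<Prod>a\<leftarrow>as. [:- a, 1:])" by simp
  have len: "length as = d" using complex_roots_int(2)[of f] by (simp add: as_def d_def)
  have as_c: "cmod a = 1" if "a \<in> set as" for a
    using circ[of a] that fac poly_linear_prod_zero[of as a] by simp
  have z_in: "z \<in> set as" using root fac poly_linear_prod_zero[of as z] by simp
  define g where "g m = graeffe_poly_impl f m" for m
  have gC: "map_poly of_int (g m) = (\<Prod>a\<leftarrow>as. [:- (a^(2^m)), 1:])" for m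
  proof -
    have "map_poly (of_int :: int \<Rightarrow> complex) (g m) = graeffe_poly_impl (map_poly of_int f) m"
      unfolding g_def by (simp add: of_int_hom.graeffe_poly_impl_hom)
    also have "\<dots> = graeffe_poly 1 as m" by (rule graeffe_poly_impl[OF fac0])
    finally show ?thesis by (simp add: graeffe_poly_def)
  qed
  have groot: "poly (map_poly of_int (g m)) (z^(2^m)) = 0" for m
  proof -
    have "z^(2^m) \<in> set (map (\<lambda>a. a^(2^m)) as)" using z_in by auto
    hence "poly (\<Prod>a\<leftarrow>map (\<lambda>a. a^(2^m)) as. [:- a, 1:]) (z^(2^m)) = 0"
      using poly_linear_prod_zero by blast
    thus ?thesis unfolding gC by (simp add: o_def)
  qed
  have gdeg: "degree (g m) = d" for m
  proof -
    have "degree (g m) = degree (map_poly (of_int :: int \<Rightarrow> complex) (g m))" by simp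
    also have "\<dots> = length as" unfolding gC by (rule degree_linear_factors)
    finally show ?thesis using len by simp
  qed
  have gnz: "g m \<noteq> 0" for m
  proof
    assume "g m = 0"
    hence "map_poly (of_int :: int \<Rightarrow> complex) (g m) = 0" by simp
    thus False unfolding gC by auto
  qed
  have M1: "mahler_measure f = 1"
  proof -
    have "mahler_measure f = cmod (lead_coeff (map_poly (of_int :: int \<Rightarrow> complex) f)) *
        (\<Prod>a\<leftarrow>as. max 1 (cmod a))"
      unfolding mahler_measure_def mahler_measure_poly_def as_def complex_roots_int_def by simp
    also have "(\<Prod>a\<leftarrow>as. max 1 (cmod a)) = (\<Prod>a\<leftarrow>as. 1)"
      by (rule arg_cong[where f = prod_list], rule map_cong) (auto simp: as_c)
    also have "(\<Prod>a\<leftarrow>as. (1::real)) = 1" by (induct as) auto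
    finally show ?thesis using mon by simp
  qed
  define B :: int where "B = 2 ^ d"
  have gcoeff: "\<bar>Polynomial.coeff (g m) i\<bar> \<le> B" for m i
  proof -
    have h1: "real_of_int \<bar>Polynomial.coeff (g m) i\<bar> \<le> real (degree (g m) choose i) * mahler_measure (g m)"
      by (rule Mignotte_bound)
    have h2: "mahler_measure (g m) = 1" unfolding g_def graeffe_poly_impl_mahler M1 by simp
    have "d choose i \<le> 2 ^ d" by (rule binomial_le_pow2)
    hence h3: "real (degree (g m) choose i) \<le> real (2 ^ d)" unfolding gdeg by (simp only: of_nat_le_iff)
    have h4: "real_of_int \<bar>Polynomial.coeff (g m) i\<bar> \<le> real (degree (g m) choose i)" using h1 h2 by simp
    have h5: "real (2 ^ d) = real_of_int (2 ^ d)" by simp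
    have "real_of_int \<bar>Polynomial.coeff (g m) i\<bar> \<le> real_of_int (2 ^ d)" using h4 h3 h5 by linarith
    thus ?thesis unfolding B_def by (simp only: of_int_le_iff)
  qed
  define S where "S = {p :: int poly. p \<noteq> 0 \<and> degree p \<le> d \<and> (\<forall>i. \<bar>Polynomial.coeff p i\<bar> \<le> B)}"
  have finS: "finite S"
  proof -
    have "inj_on (\<lambda>p. restrict (Polynomial.coeff p) {..d}) S"
    proof (rule inj_onI)
      fix p q assume p: "p \<in> S" and q: "q \<in> S" and e: "restrict (Polynomial.coeff p) {..d} = restrict (Polynomial.coeff q) {..d}"
      show "p = q"
      proof (rule poly_eqI)
        fix n
        show "Polynomial.coeff p n = Polynomial.coeff q n"
        proof (cases "n \<le> d")
          case True thus ?thesis using fun_cong[OF e, of n] by simp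
        next
          case False thus ?thesis using p q by (auto simp: S_def coeff_eq_0)
        qed
      qed
    qed
    moreover have "(\<lambda>p. restrict (Polynomial.coeff p) {..d}) ` S \<subseteq> PiE {..d} (\<lambda>_. {-B..B})"
      by (force simp: S_def abs_le_iff)
    moreover have "finite (PiE {..d} (\<lambda>_. {-B..B}))" by (intro finite_PiE) auto
    ultimately show ?thesis using inj_on_finite by blast
  qed
  define R where "R = (\<Union>p\<in>S. {x::complex. poly (map_poly of_int p) x = 0})"
  have finR: "finite R" unfolding R_def
  proof (intro finite_UN_I finS)
    fix p assume "p \<in> S"
    hence "map_poly (of_int :: int \<Rightarrow> complex) p \<noteq> 0" by (simp add: S_def)
    thus "finite {x::complex. poly (map_poly of_int p) x = 0}" by (rule poly_roots_finite)
  qed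
  have inR: "z^(2^m) \<in> R" for m
  proof -
    have "g m \<in> S" using gnz gdeg gcoeff by (simp add: S_def)
    thus ?thesis unfolding R_def using groot[of m] by blast
  qed
  have "\<not> inj (\<lambda>m::nat. z^(2^m))"
  proof
    assume "inj (\<lambda>m::nat. z^(2^m))"
    moreover have "range (\<lambda>m::nat. z^(2^m)) \<subseteq> R" using inR by auto
    ultimately have "finite (UNIV :: nat set)"
      using finR by (meson finite_imageD finite_subset)
    thus False by simp
  qed
  then obtain a b :: nat where ab: "a \<noteq> b" "z^(2^a) = z^(2^b)" unfolding inj_def by blast
  have z0: "z \<noteq> 0" using as_c[OF z_in] by auto
  have "\<exists>a b::nat. a < b \<and> z^(2^a) = z^(2^b)"
    using ab by (metis nat_neq_iff)
  then obtain a b :: nat where ab: "a < b" "z^(2^a) = z^(2^b)" by blast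
  have lt: "(2::nat)^a < 2^b" using ab(1) by simp
  have "z^(2^b) = z^(2^a) * z^(2^b - 2^a)"
    using lt by (simp flip: power_add)
  hence "z^(2^b - 2^a) = 1" using ab(2) z0 by simp
  moreover have "2^b - 2^a > (0::nat)" using lt by simp
  ultimately show ?thesis by blast
qed


definition Qp :: "int poly" where "Qp = [:0, -1, -1, -1, 1:]"

lemma Pk_Suc: "Pk (Suc k) = Pk k + Polynomial.monom 1 (4*k+4) * Qp"
  unfolding Pk_def Qp_def by (simp add: algebra_simps)

lemma Pk_0: "Pk 0 = 1 + Qp"
  unfolding Pk_def Qp_def by simp

lemma poly_Qp: "poly (map_poly (of_int :: int \<Rightarrow> 'a::comm_ring_1) Qp) x = x^4 - x^3 - x^2 - x"
  by (simp add: Qp_def algebra_simps eval_nat_numeral)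

lemma poly_Pk_0: "poly (map_poly (of_int :: int \<Rightarrow> 'a::comm_ring_1) (Pk 0)) x = 1 + (x^4 - x^3 - x^2 - x)"
  by (simp only: Pk_0 of_int_poly_hom.hom_add poly_add poly_Qp of_int_poly_hom.hom_one poly_1)

lemma poly_Pk_Suc: "poly (map_poly (of_int :: int \<Rightarrow> 'a::comm_ring_1) (Pk (Suc k))) x =
   poly (map_poly of_int (Pk k)) x + x^(4*k+4) * (x^4 - x^3 - x^2 - x)"
  by (simp only: Pk_Suc of_int_poly_hom.hom_add of_int_poly_hom.hom_mult poly_add poly_mult
        of_int_hom.map_poly_hom_monom poly_monom of_int_1 mult_1_left poly_Qp)

lemma Pk_eval:
  fixes x :: "'a::comm_ring_1"
  shows "(x^4 - 1) * poly (map_poly of_int (Pk k)) x =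
     x^(4*k+8) - x^(4*k+7) - x^(4*k+6) - x^(4*k+5) + x^3 + x^2 + x - 1"
proof (induct k)
  case 0
  show ?case unfolding poly_Pk_0 by (simp add: algebra_simps eval_nat_numeral)
next
  case (Suc k)
  have "(x^4 - 1) * poly (map_poly of_int (Pk (Suc k))) x =
      (x^4 - 1) * poly (map_poly of_int (Pk k)) x + x^(4*k+4) * (x^4 - 1) * (x^4 - x^3 - x^2 - x)"
    unfolding poly_Pk_Suc by (simp add: algebra_simps)
  also have "\<dots> = x^(4*k+8) - x^(4*k+7) - x^(4*k+6) - x^(4*k+5) + x^3 + x^2 + x - 1
       + x^(4*k+4) * (x^4 - 1) * (x^4 - x^3 - x^2 - x)" unfolding Suc ..
  also have "\<dots> = x^(4*Suc k+8) - x^(4*Suc k+7) - x^(4*Suc k+6) - x^(4*Suc k+5) + x^3 + x^2 + x - 1"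
  proof -
    define y where "y = x^(4*k+4)"
    have e: "x^(4*k+8) = y*x^4" "x^(4*k+7) = y*x^3" "x^(4*k+6) = y*x^2" "x^(4*k+5) = y*x^1"
      "x^(4*Suc k+8) = y*x^8" "x^(4*Suc k+7) = y*x^7" "x^(4*Suc k+6) = y*x^6" "x^(4*Suc k+5) = y*x^5"
      unfolding y_def by (subst power_add[symmetric], simp add: algebra_simps)+
    have "y*x^4 - y*x^3 - y*x^2 - y*x^1 + x^3 + x^2 + x - 1 + y*(x^4-1)*(x^4-x^3-x^2-x) = y*x^8 - y*x^7 - y*x^6 - y*x^5 + x^3+x^2+x-1"
      by (simp add: algebra_simps eval_nat_numeral)
    thus ?thesis unfolding e y_def[symmetric] .
  qed
  finally show ?case .
qed

lemma Pk_degree_lead: "degree (Pk k) = 4*k+4 \<and> lead_coeff (Pk k) = 1"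
proof (induct k)
  case 0
  have "Pk 0 = [:1, -1, -1, -1, 1:]" unfolding Pk_0 Qp_def
    by (rule poly_eqI) (simp add: coeff_pCons split: nat.split)
  thus ?case by simp
next
  case (Suc k)
  have dQ: "degree Qp = 4" "Polynomial.coeff Qp 4 = 1" by (simp_all add: Qp_def eval_nat_numeral)
  have dq: "degree (Polynomial.monom (1::int) (4*k+4) * Qp) = 4*k+8"
  proof -
    have "Polynomial.monom (1::int) (4*k+4) \<noteq> 0" by simp
    moreover have "Qp \<noteq> 0" using dQ by auto
    ultimately have "degree (Polynomial.monom (1::int) (4*k+4) * Qp) = degree (Polynomial.monom (1::int) (4*k+4)) + degree Qp"
      by (rule degree_mult_eq)
    thus ?thesis using dQ by (simp add: degree_monom_eq)
  qed
  have cq: "Polynomial.coeff (Polynomial.monom (1::int) (4*k+4) * Qp) (4*k+8) = 1"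
    using dQ by (simp add: coeff_monom_mult)
  have dlt: "degree (Pk k) < degree (Polynomial.monom (1::int) (4*k+4) * Qp)"
    using Suc dq by simp
  have "degree (Pk (Suc k)) = 4*k+8" unfolding Pk_Suc
    using degree_add_eq_right[OF dlt] dq by simp
  moreover have "Polynomial.coeff (Pk (Suc k)) (4*k+8) = 1" unfolding Pk_Suc
    using cq Suc coeff_eq_0[of "Pk k" "4*k+8"] by simp
  ultimately show ?case by simp
qed

lemma Pk_coeff0: "poly (Pk k) 0 = 1"
proof -
  have "poly (map_poly (of_int :: int \<Rightarrow> int) (Pk k)) 0 = 1"
    by (induct k) (simp_all only: poly_Pk_0 poly_Pk_Suc, simp_all)
  thus ?thesis by simp
qed



definition Gt :: "nat \<Rightarrow> real \<Rightarrow> real" where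
  "Gt k t = sin ((2*real k+4)*t) - sin ((2*real k+3)*t) - sin ((2*real k+2)*t) - sin ((2*real k+1)*t)"

lemma pow_inv_cancel:
  fixes z w :: "'a::comm_ring_1"
  assumes "z * w = 1"
  shows "z^(n+i) * w^n = z^i"
proof -
  have "z^(n+i) * w^n = z^i * (z*w)^n" by (simp add: power_add power_mult_distrib algebra_simps)
  thus ?thesis using assms by simp
qed

lemma pow_inv_cancel':
  fixes z w :: "'a::comm_ring_1"
  assumes "z * w = 1" "N = n + i"
  shows "z^N * w^n = z^i"
  using pow_inv_cancel[OF assms(1), of n i] assms(2) by simp

lemma E_cis:
  fixes t :: real
  defines "z \<equiv> cis t"
  assumes G0: "Gt k t = 0"
  shows "z^(4*k+8) - z^(4*k+7) - z^(4*k+6) - z^(4*k+5) + z^3 + z^2 + z - 1 = 0"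
proof -
  define A where "A = z^(2*k+4) - z^(2*k+3) - z^(2*k+2) - z^(2*k+1)"
  have ImA: "Im A = Gt k t"
  proof -
    have "Im A = sin (real (2*k+4)*t) - sin (real (2*k+3)*t) - sin (real (2*k+2)*t) - sin (real (2*k+1)*t)"
      by (simp only: A_def z_def DeMoivre minus_complex.sel cis.sel)
    also have "\<dots> = Gt k t" unfolding Gt_def by (simp add: algebra_simps)
    finally show ?thesis .
  qed
  hence cA: "cnj A = A" using G0 by (simp add: complex_eq_iff)
  define w where "w = inverse z"
  have zw: "z * w = 1" unfolding w_def z_def by (simp add: cis_mult)
  have cz: "cnj z = w" unfolding w_def z_def by (simp add: cis_cnj cis_inverse)
  have "cnj A = w^(2*k+4) - w^(2*k+3) - w^(2*k+2) - w^(2*k+1)"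
    unfolding A_def by (simp add: cz)
  moreover have p: "z^(2*k+4) * w^(2*k+4) = z^0" "z^(2*k+4) * w^(2*k+3) = z^1"
     "z^(2*k+4) * w^(2*k+2) = z^2" "z^(2*k+4) * w^(2*k+1) = z^3"
    by (rule pow_inv_cancel'[OF zw], simp)+
  ultimately have "z^(2*k+4) * cnj A = 1 - z - z^2 - z^3"
    by (simp only: right_diff_distrib p power_0 power_one_right)
  moreover have "z^(2*k+4) * A = z^(4*k+8) - z^(4*k+7) - z^(4*k+6) - z^(4*k+5)"
  proof -
    have q: "z^(2*k+4) * z^(2*k+4) = z^(4*k+8)" "z^(2*k+4) * z^(2*k+3) = z^(4*k+7)"
      "z^(2*k+4) * z^(2*k+2) = z^(4*k+6)" "z^(2*k+4) * z^(2*k+1) = z^(4*k+5)"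
      by (subst power_add[symmetric], simp add: algebra_simps)+
    show ?thesis unfolding A_def by (simp only: right_diff_distrib q)
  qed
  ultimately have "z^(4*k+8) - z^(4*k+7) - z^(4*k+6) - z^(4*k+5) + z^3 + z^2 + z - 1
      = z^(2*k+4) * A - z^(2*k+4) * cnj A" by simp
  thus ?thesis using cA by simp
qed

lemma cis_pow4:
  assumes "sin (2*t) \<noteq> 0"
  shows "cis t ^ 4 \<noteq> 1"
proof
  assume h: "cis t ^ 4 = 1"
  have "(cis t ^ 2 - 1) * (cis t ^ 2 + 1) = cis t ^ 4 - 1" by (simp add: algebra_simps eval_nat_numeral)
  hence "cis t ^ 2 - 1 = 0 \<or> cis t ^ 2 + 1 = 0" using h by simp
  hence "Im (cis t ^ 2 - 1) = 0 \<or> Im (cis t ^ 2 + 1) = 0" by (metis zero_complex.sel(2))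
  hence "Im (cis t ^ 2) = 0" by (simp only: minus_complex.sel plus_complex.sel one_complex.sel) simp
  moreover have "Im (cis t ^ 2) = sin (2*t)" by (simp add: DeMoivre)
  ultimately show False using assms by simp
qed

lemma G_form:
  "Gt k t = 2 * (cos ((2*real k+5/2)*t) * sin (3*t/2) - sin ((2*real k+5/2)*t) * cos (t/2))"
proof -
  define M where "M = (2*real k+5/2)*t"
  have a: "(2*real k+4)*t = M + 3*t/2" "(2*real k+3)*t = M + t/2" "(2*real k+2)*t = M - t/2" "(2*real k+1)*t = M - 3*t/2"
    unfolding M_def by (simp_all add: algebra_simps)
  show ?thesis unfolding Gt_def a unfolding M_def[symmetric]
    by (simp only: sin_add sin_diff) (simp add: algebra_simps)
qed

definition hph :: "nat \<Rightarrow> real \<Rightarrow> real" where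
  "hph k t = (2*real k+5/2)*t - arctan (sin (3*t/2) / cos (t/2))"

lemma G_zero:
  assumes t: "0 \<le> t" "t < pi" and h: "hph k t = real j * pi"
  shows "Gt k t = 0"
proof -
  define M where "M = (2*real k+5/2)*t"
  define s where "s = sin (3*t/2)"
  define c where "c = cos (t/2)"
  define r where "r = s / c"
  define p where "p = arctan r"
  have c0: "c > 0" unfolding c_def using t by (intro cos_gt_zero_pi) auto
  have "M - p = real j * pi" using h unfolding hph_def M_def p_def r_def s_def c_def .
  hence "sin (M - p) = 0" by (simp add: sin_npi)
  hence e1: "sin M * cos p - cos M * sin p = 0" by (simp add: sin_diff)
  have "1 + r^2 > 0" using zero_le_power2[of r] by linarith
  hence cp: "cos p > 0" unfolding p_def cos_arctan by simp
  have sp: "sin p = r * cos p" unfolding p_def sin_arctan cos_arctan by simp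
  have "cos p * (sin M - cos M * r) = 0" using e1 sp by (simp add: algebra_simps)
  hence "sin M - cos M * r = 0" using cp by simp
  hence "sin M * c - cos M * s = 0" using c0 unfolding r_def by (simp add: field_simps)
  thus ?thesis unfolding G_form M_def[symmetric] s_def[symmetric] c_def[symmetric]
    by (simp add: algebra_simps)
qed

lemma hph_0: "hph k 0 = 0" by (simp add: hph_def)

lemma hph_half: "hph k (pi/2) = real (k+1) * pi"
proof -
  have a: "3 * (pi/2) / 2 = pi - pi/4" "pi/2/2 = pi/4" by simp_all
  have "sin (3 * (pi/2) / 2) / cos (pi/2/2) = 1" unfolding a sin_pi_minus
    by (simp add: sin_45 cos_45)
  hence "hph k (pi/2) = (2*real k+5/2)*(pi/2) - pi/4" unfolding hph_def by (simp add: arctan_one)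
  also have "\<dots> = real (k+1) * pi" by (simp add: algebra_simps)
  finally show ?thesis .
qed

lemma hph_cont: "continuous_on {0..pi - pi/(8*real k+10)} (hph k)"
proof -
  have "cos (t/2) \<noteq> 0" if "t \<in> {0..pi - pi/(8*real k+10)}" for t
  proof -
    have "pi/(8*real k+10) > 0" by simp
    moreover have "t \<le> pi - pi/(8*real k+10)" using that by simp
    ultimately have "t < pi" by linarith
    hence "cos (t/2) > 0" using that by (intro cos_gt_zero_pi) auto
    thus ?thesis by simp
  qed
  thus ?thesis unfolding hph_def[abs_def]
    by (intro continuous_intros) auto
qed

lemma hph_end: "hph k (pi - pi/(8*real k+10)) \<ge> real (2*k+2) * pi"
proof -
  define t where "t = pi - pi/(8*real k+10)"
  have pos: "pi/(8*real k+10) > 0" by simp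
  have le: "pi/(8*real k+10) \<le> pi/10"
    by (intro divide_left_mono) auto
  have tpi: "t < pi" "t \<ge> 0" unfolding t_def using pos le by (auto simp: field_simps)
  have c0: "cos (t/2) > 0" using tpi by (intro cos_gt_zero_pi) auto
  have "3*t/2 \<ge> pi" unfolding t_def using le by (simp add: field_simps)
  moreover have "3*t/2 < 2*pi" using tpi by simp
  ultimately have "sin (3*t/2) \<le> 0" by (rule sin_le_zero)
  hence "sin (3*t/2) / cos (t/2) \<le> 0" using c0 by (simp add: divide_nonpos_pos)
  hence at: "arctan (sin (3*t/2) / cos (t/2)) \<le> 0" by (simp add: arctan_le_zero_iff)
  have "(2*real k+5/2)*t = (2*real k+5/2)*pi - pi/4"
    unfolding t_def by (simp add: field_simps)
  hence "hph k t \<ge> (2*real k+5/2)*pi - pi/4" unfolding hph_def using at by simp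
  moreover have "(2*real k+5/2)*pi - pi/4 \<ge> real (2*k+2) * pi" by (simp add: algebra_simps)
  ultimately show ?thesis unfolding t_def by linarith
qed

lemma thetas_exist:
  assumes j: "j \<in> {1..2*k+2}"
  shows "\<exists>x. 0 < x \<and> x < pi \<and> hph k x = real j * pi"
proof -
  define t where "t = pi - pi/(8*real k+10)"
  have pos: "pi/(8*real k+10) > 0" by simp
  have tpi: "t < pi" "t \<ge> 0" unfolding t_def using pos
    by (auto simp: field_simps intro!: divide_left_mono[of "8*real k+10" 1 pi, simplified])
  have jj: "real j * pi \<le> real (2*k+2) * pi" using j by (intro mult_right_mono) auto
  have "hph k 0 \<le> real j * pi" unfolding hph_0 using j by simp
  moreover have "real j * pi \<le> hph k t" using hph_end[of k] jj unfolding t_def by linarith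
  ultimately have "hph k 0 \<le> real j * pi" "real j * pi \<le> hph k t" by auto
  from IVT'[OF this tpi(2) hph_cont[of k, folded t_def]]
  obtain x where x: "0 \<le> x" "x \<le> t" "hph k x = real j * pi" by auto
  have "x \<noteq> 0" using x(3) j hph_0[of k] by auto
  thus ?thesis using x tpi by (intro exI[of _ x]) auto
qed



lemma poly_of_int_of_real:
  "poly (map_poly (of_int :: int \<Rightarrow> complex) p) (of_real x) = of_real (poly (map_poly (of_int :: int \<Rightarrow> real) p) x)"
proof -
  have "map_poly (of_int :: int \<Rightarrow> complex) p = map_poly of_real (map_poly (of_int :: int \<Rightarrow> real) p)"
    by (simp add: map_poly_map_poly o_def)
  thus ?thesis by (simp add: of_real_hom.poly_map_poly)
qed

lemma Pk_inv_root:
  fixes a :: real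
  assumes a: "0 < a" "a < 1" and r: "poly (map_poly of_int (Pk k)) a = 0"
  shows "poly (map_poly of_int (Pk k)) (1/a) = 0"
proof -
  define w where "w = 1/a"
  have aw: "a * w = 1" using a unfolding w_def by simp
  have Ea: "a^(4*k+8) - a^(4*k+7) - a^(4*k+6) - a^(4*k+5) + a^3 + a^2 + a - 1 = 0"
    using Pk_eval[of a k] r by simp
  have p: "a^(4*k+8) * w^(4*k+8) = a^0" "a^(4*k+8) * w^(4*k+7) = a^1"
     "a^(4*k+8) * w^(4*k+6) = a^2" "a^(4*k+8) * w^(4*k+5) = a^3"
     "a^(4*k+8) * w^3 = a^(4*k+5)" "a^(4*k+8) * w^2 = a^(4*k+6)"
     "a^(4*k+8) * w^1 = a^(4*k+7)" "a^(4*k+8) * w^0 = a^(4*k+8)"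
    by (rule pow_inv_cancel'[OF aw], simp)+
  have "a^(4*k+8) * (w^(4*k+8) - w^(4*k+7) - w^(4*k+6) - w^(4*k+5) + w^3 + w^2 + w^1 - w^0)
      = - (a^(4*k+8) - a^(4*k+7) - a^(4*k+6) - a^(4*k+5) + a^3 + a^2 + a^1 - a^0)"
    by (simp only: right_diff_distrib distrib_left p)
  hence "a^(4*k+8) * (w^(4*k+8) - w^(4*k+7) - w^(4*k+6) - w^(4*k+5) + w^3 + w^2 + w - 1) = 0"
    using Ea by simp
  hence Ew: "w^(4*k+8) - w^(4*k+7) - w^(4*k+6) - w^(4*k+5) + w^3 + w^2 + w - 1 = 0"
    using a by simp
  have "w > 1" using a unfolding w_def by simp
  hence "w^4 > 1" by simp
  hence "w^4 - 1 \<noteq> 0" by simp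
  with Pk_eval[of w k] Ew show ?thesis unfolding w_def[symmetric] by simp
qed

lemma Gt_minus: "Gt k (-t) = - Gt k t"
  unfolding Gt_def by simp

lemma cis_root:
  assumes "sin (2*t) \<noteq> 0" "Gt k t = 0"
  shows "poly (map_poly (of_int :: int \<Rightarrow> complex) (Pk k)) (cis t) = 0"
proof -
  have "(cis t ^ 4 - 1) * poly (map_poly (of_int :: int \<Rightarrow> complex) (Pk k)) (cis t) = 0"
    unfolding Pk_eval using E_cis[OF assms(2)] by simp
  thus ?thesis using cis_pow4[OF assms(1)] by simp
qed

lemma roots_Pk:
  fixes a :: real
  assumes a: "0 < a" "a < 1" and r: "poly (map_poly of_int (Pk k)) a = 0"
  shows "\<exists>L. map_poly (of_int :: int \<Rightarrow> complex) (Pk k) = (\<Prod>x\<leftarrow>L. [:-x,1:]) \<and> distinct L \<and>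
     (\<forall>z \<in> set L. cmod z = 1 \<or> z = of_real a \<or> z = of_real (1/a))"
proof -
  define PC where "PC = map_poly (of_int :: int \<Rightarrow> complex) (Pk k)"
  define L where "L = complex_roots_int (Pk k)"
  have ld: "lead_coeff (Pk k) = 1" using Pk_degree_lead[of k] by blast
  have PCL: "PC = (\<Prod>x\<leftarrow>L. [:-x,1:])"
    using complex_roots_int(1)[of "Pk k", unfolded ld] unfolding PC_def L_def by simp
  have lenL: "length L = 4*k+4"
    using complex_roots_int(2)[of "Pk k"] Pk_degree_lead[of k] unfolding L_def by simp
  have inL: "z \<in> set L" if "poly PC z = 0" for z
    using that unfolding PCL poly_linear_prod_zero .
  have ra: "poly PC (of_real a) = 0" unfolding PC_def poly_of_int_of_real r by simp
  have ra': "poly PC (of_real (1/a)) = 0" unfolding PC_def poly_of_int_of_real Pk_inv_root[OF a r] by simp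
  define J where "J = {1..2*k+2} - {k+1}"
  define th where "th j = (SOME x. 0 < x \<and> x < pi \<and> hph k x = real j * pi)" for j
  have th: "0 < th j \<and> th j < pi \<and> hph k (th j) = real j * pi" if "j \<in> J" for j
  proof -
    have "j \<in> {1..2*k+2}" using that unfolding J_def by auto
    from someI_ex[OF thetas_exist[OF this]] show ?thesis unfolding th_def .
  qed
  have thne: "th j \<noteq> pi/2" if "j \<in> J" for j
  proof
    assume e: "th j = pi/2"
    have "real j * pi = hph k (th j)" using th[OF that] by simp
    also have "\<dots> = real (k+1) * pi" unfolding e by (rule hph_half)
    finally have "real j * pi = real (k+1) * pi" .
    hence "j = k+1" by simp
    thus False using that unfolding J_def by simp
  qed
  have thinj: "th i = th j \<Longrightarrow> i = j" if "i \<in> J" "j \<in> J" for i j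
  proof -
    assume e: "th i = th j"
    have "real i * pi = hph k (th i)" using th[OF that(1)] by simp
    also have "\<dots> = hph k (th j)" unfolding e ..
    also have "\<dots> = real j * pi" using th[OF that(2)] by simp
    finally show "i = j" by simp
  qed
  have sin2: "sin (2 * th j) \<noteq> 0" if "j \<in> J" for j
  proof -
    have t0: "0 < th j" and t1: "th j < pi" using th[OF that] by blast+
    have s: "sin (th j) > 0" using t0 t1 by (rule sin_gt_zero)
    have "cos (th j) \<noteq> 0"
    proof
      assume "cos (th j) = 0"
      hence "cos (th j) = cos (pi/2)" by simp
      hence "th j = pi/2" using t0 t1 by (intro cos_inj_pi[of "th j" "pi/2"]) simp_all
      thus False using thne[OF that] by simp
    qed
    thus ?thesis using s unfolding sin_double by simp
  qed
  have G: "Gt k (th j) = 0" if "j \<in> J" for j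
    using th[OF that] by (intro G_zero[of "th j" k j]) auto
  have rt1: "poly PC (cis (th j)) = 0" if "j \<in> J" for j
    unfolding PC_def using sin2[OF that] G[OF that] by (rule cis_root)
  have rt2: "poly PC (cis (- th j)) = 0" if "j \<in> J" for j
    unfolding PC_def using sin2[OF that] G[OF that] by (intro cis_root) (auto simp: Gt_minus)
  define js where "js = sorted_list_of_set J"
  have finJ: "finite J" unfolding J_def by simp
  have setjs: "set js = J" and djs: "distinct js" unfolding js_def using finJ by auto
  have cardJ: "card J = 2*k+1" unfolding J_def by (simp add: card_Diff_singleton)
  have lenjs: "length js = 2*k+1" using distinct_card[OF djs] setjs cardJ by simp
  define R where "R = map (\<lambda>j. cis (th j)) js @ map (\<lambda>j. cis (- th j)) js @ [of_real a, of_real (1/a)]"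
  have lenR: "length R = 4*k+4" unfolding R_def using lenjs by simp
  have dR: "distinct R"
  proof -
    have d1: "distinct (map (\<lambda>j. cis (th j)) js)"
    proof (subst distinct_map, intro conjI djs inj_onI)
      fix i j assume ij: "i \<in> set js" "j \<in> set js" and e: "cis (th i) = cis (th j)"
      hence "cos (th i) = cos (th j)" by (metis cis.sel(1))
      hence "th i = th j" using th ij setjs by (intro cos_inj_pi[of "th i" "th j"]) (auto simp: less_imp_le)
      thus "i = j" using thinj ij setjs by auto
    qed
    have d2: "distinct (map (\<lambda>j. cis (- th j)) js)"
    proof (subst distinct_map, intro conjI djs inj_onI)
      fix i j assume ij: "i \<in> set js" "j \<in> set js" and e: "cis (- th i) = cis (- th j)"
      hence "cos (- th i) = cos (- th j)" by (metis cis.sel(1))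
      hence "cos (th i) = cos (th j)" by simp
      hence "th i = th j" using th ij setjs by (intro cos_inj_pi[of "th i" "th j"]) (auto simp: less_imp_le)
      thus "i = j" using thinj ij setjs by auto
    qed
    have im1: "Im z > 0" if "z \<in> set (map (\<lambda>j. cis (th j)) js)" for z
      using that th setjs by (auto intro!: sin_gt_zero)
    have im2: "Im z < 0" if "z \<in> set (map (\<lambda>j. cis (- th j)) js)" for z
      using that th setjs by (auto intro!: sin_gt_zero)
    have "1/a > 1" using a by simp
    hence aa: "a \<noteq> 1/a" using a by linarith
    define A where "A = map (\<lambda>j. cis (th j)) js"
    define B where "B = map (\<lambda>j. cis (- th j)) js"
    define C where "C = [complex_of_real a, complex_of_real (1/a)]"
    have dC: "distinct C" unfolding C_def using aa by (simp only: distinct_length_2_or_more distinct_singleton of_real_eq_iff) simp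
    have iC: "Im z = 0" if "z \<in> set C" for z using that unfolding C_def by auto
    have ab: "set A \<inter> set B = {}" using im1 im2 unfolding A_def B_def by force
    have ac: "set A \<inter> set C = {}" using im1 iC unfolding A_def by force
    have bc: "set B \<inter> set C = {}" using im2 iC unfolding B_def by force
    have "distinct (B @ C)" using d2 dC bc unfolding B_def by simp
    moreover have "set A \<inter> set (B @ C) = {}" using ab ac by auto
    ultimately have "distinct (A @ B @ C)" using d1 unfolding A_def by simp
    thus ?thesis unfolding R_def A_def B_def C_def by simp
  qed
  have sub: "set R \<subseteq> set L"
    unfolding R_def using rt1 rt2 ra ra' inL setjs by auto
  have cR: "card (set R) = 4*k+4" using distinct_card[OF dR] lenR by simp
  have cL: "card (set L) \<le> 4*k+4" using card_length[of L] lenL by simp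
  have cle: "card (set R) \<le> card (set L)" using sub by (intro card_mono) auto
  have eqRL: "set R = set L" using card_subset_eq[OF _ sub] cR cL cle by simp
  have dL: "distinct L" using card_distinct[of L] cR cL cle eqRL lenL by simp
  have circ: "cmod z = 1 \<or> z = of_real a \<or> z = of_real (1/a)" if "z \<in> set L" for z
  proof -
    have "z \<in> set R" using that eqRL by simp
    thus ?thesis unfolding R_def by auto
  qed
  show ?thesis using PCL dL circ unfolding PC_def by blast
qed


lemma prod_list_01:
  assumes "\<forall>a\<in>set xs. 0 \<le> f a \<and> f a \<le> (1::real)"
  shows "0 \<le> prod_list (map f xs) \<and> prod_list (map f xs) \<le> 1"
  using assms
proof (induct xs)
  case (Cons y ys)
  hence h: "0 \<le> prod_list (map f ys)" "prod_list (map f ys) \<le> 1" "0 \<le> f y" "f y \<le> 1" by auto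
  have "f y * prod_list (map f ys) \<le> 1 * 1" using h by (intro mult_mono) auto
  thus ?case using h by simp
qed simp

lemma prod_list_le_elem:
  assumes "\<forall>a\<in>set xs. 0 \<le> f a \<and> f a \<le> (1::real)" and "x \<in> set xs"
  shows "prod_list (map f xs) \<le> f x"
  using assms
proof (induct xs)
  case (Cons y ys)
  have h: "0 \<le> f y" "f y \<le> 1" using Cons(2) by auto
  have h2: "0 \<le> prod_list (map f ys)" "prod_list (map f ys) \<le> 1"
    using prod_list_01[of ys f] Cons(2) by auto
  show ?case
  proof (cases "x = y")
    case True
    have "f y * prod_list (map f ys) \<le> f y * 1" using h h2 by (intro mult_left_mono) auto
    thus ?thesis using True by simp
  next
    case False
    hence "x \<in> set ys" using Cons(3) by simp
    hence "prod_list (map f ys) \<le> f x" using Cons by simp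
    hence "f y * prod_list (map f ys) \<le> 1 * f x" using h h2 by (intro mult_mono) auto
    thus ?thesis by simp
  qed
qed simp

lemma linear_prod_nz: "(\<Prod>a\<leftarrow>as. [:- a, 1:]) \<noteq> (0 :: 'a::idom poly)"
  unfolding prod_list_zero_iff by auto

lemma order_linear_prod_distinct:
  fixes L :: "'a::idom list"
  assumes "distinct L"
  shows "Polynomial.order x (\<Prod>a\<leftarrow>L. [:- a, 1:]) \<le> 1"
  using assms
proof (induct L)
  case Nil
  have "Polynomial.order x (1 :: 'a poly) = 0" by (rule order_0I) simp
  thus ?case by simp
next
  case (Cons y ys)
  have nz: "[:- y, 1:] * (\<Prod>a\<leftarrow>ys. [:- a, 1:]) \<noteq> 0" using linear_prod_nz[of "y # ys"] by (simp only: list.map(2) prod_list.Cons not_False_eq_True)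
  have "Polynomial.order x (\<Prod>a\<leftarrow>y # ys. [:- a, 1:]) = Polynomial.order x [:- y, 1:] + Polynomial.order x (\<Prod>a\<leftarrow>ys. [:- a, 1:])"
    using order_mult[OF nz] by simp
  also have "Polynomial.order x [:- y, 1:] = (if y = x then 1 else 0)" unfolding order_linear' by simp
  finally have e: "Polynomial.order x (\<Prod>a\<leftarrow>y # ys. [:- a, 1:]) = (if y = x then 1 else 0) + Polynomial.order x (\<Prod>a\<leftarrow>ys. [:- a, 1:])" .
  show ?case
  proof (cases "y = x")
    case True
    hence "x \<notin> set ys" using Cons(2) by simp
    hence "poly (\<Prod>a\<leftarrow>ys. [:- a, 1:]) x \<noteq> 0" using poly_linear_prod_zero by metis
    hence "Polynomial.order x (\<Prod>a\<leftarrow>ys. [:- a, 1:]) = 0" by (rule order_0I)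
    thus ?thesis using e True by simp
  next
    case False
    thus ?thesis using e Cons by simp
  qed
qed

lemma poly_linear_prod_0: "poly (\<Prod>a\<leftarrow>as. [:- a, 1:]) 0 = (\<Prod>a\<leftarrow>as. - (a::'a::comm_ring_1))"
  by (induct as) auto

lemma norm_prod_neg: "cmod (\<Prod>a\<leftarrow>as. - a) = (\<Prod>a\<leftarrow>as. cmod a)"
  by (induct as) (auto simp: norm_mult)

lemma map_dvd_of_int: "f dvd g \<Longrightarrow> map_poly (of_int :: int \<Rightarrow> complex) f dvd map_poly of_int g"
  by (erule dvdE) (simp add: of_int_poly_hom.hom_mult)

theorem mainTheorem5:
  fixes k :: nat and fs :: "int poly list" and \<alpha> :: real
  assumes monic_irr: "\<forall>f \<in> set fs. lead_coeff f = 1 \<and> irreducible f"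
    and fact: "prod_list fs = Pk k"
    and alpha_range: "0 < \<alpha>" "\<alpha> < 1"
    and alpha_root: "poly (map_poly (of_int :: int \<Rightarrow> real) (Pk k)) \<alpha> = 0"
    and alpha_unique: "\<forall>x::real. 0 < x \<and> x < 1 \<and> poly (map_poly (of_int :: int \<Rightarrow> real) (Pk k)) x = 0 \<longrightarrow> x = \<alpha>"
    and nonempty: "fs \<noteq> []"
    and first: "poly (map_poly (of_int :: int \<Rightarrow> real) (fs ! 0)) \<alpha> = 0"
  shows "poly (map_poly (of_int :: int \<Rightarrow> real) (fs ! 0)) (1 / \<alpha>) = 0
    \<and> (\<forall>i. 1 \<le> i \<and> i < length fs \<longrightarrow>
          (\<forall>z::complex. poly (map_poly (of_int :: int \<Rightarrow> complex) (fs ! i)) z = 0 \<longrightarrow> (\<exists>n>0. z ^ n = 1)))"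
proof -
  obtain L where PCL: "map_poly (of_int :: int \<Rightarrow> complex) (Pk k) = (\<Prod>x\<leftarrow>L. [:-x,1:])"
    and dL: "distinct L" and circL: "\<forall>z \<in> set L. cmod z = 1 \<or> z = of_real \<alpha> \<or> z = of_real (1/\<alpha>)"
    using roots_Pk[OF alpha_range alpha_root] by blast
  define PC where "PC = map_poly (of_int :: int \<Rightarrow> complex) (Pk k)"
  define \<beta> where "\<beta> = complex_of_real \<alpha>"
  define \<beta>' where "\<beta>' = complex_of_real (1/\<alpha>)"
  have PCnz: "PC \<noteq> 0" unfolding PC_def PCL by (rule linear_prod_nz)
  have PCroot: "cmod z = 1 \<or> z = \<beta> \<or> z = \<beta>'" if "poly PC z = 0" for z
  proof -
    have "z \<in> set L" using that unfolding PC_def PCL poly_linear_prod_zero .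
    thus ?thesis using circL unfolding \<beta>_def \<beta>'_def by blast
  qed
  have ord1: "Polynomial.order x PC \<le> 1" for x unfolding PC_def PCL by (rule order_linear_prod_distinct[OF dL])
  obtain f0 rest where fs: "fs = f0 # rest" using nonempty by (cases fs) auto
  have f0: "fs ! 0 = f0" unfolding fs by simp
  have mon0: "lead_coeff f0 = 1" using monic_irr unfolding fs by simp
  have prodfs: "Pk k = f0 * prod_list rest" using fact unfolding fs by simp
  have f0dvd: "f0 dvd Pk k" unfolding prodfs by simp
  define F0 where "F0 = map_poly (of_int :: int \<Rightarrow> complex) f0"
  have F0dvd: "F0 dvd PC" unfolding F0_def PC_def by (rule map_dvd_of_int[OF f0dvd])
  have F0nz: "F0 \<noteq> 0" unfolding F0_def using mon0 by auto
  have F0beta: "poly F0 \<beta> = 0" unfolding F0_def \<beta>_def poly_of_int_of_real using first f0 by simp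
  have part1: "poly F0 \<beta>' = 0"
  proof (rule ccontr)
    assume nb: "poly F0 \<beta>' \<noteq> 0"
    define as where "as = complex_roots_int f0"
    have fac: "F0 = (\<Prod>a\<leftarrow>as. [:- a, 1:])"
      using complex_roots_int(1)[of f0, unfolded mon0] unfolding F0_def as_def by simp
    have rootsF0: "poly F0 a = 0" if "a \<in> set as" for a
      unfolding fac poly_linear_prod_zero using that .
    have vals: "cmod a = 1 \<or> a = \<beta>" if "a \<in> set as" for a
    proof -
      have "poly PC a = 0" using rootsF0[OF that] F0dvd by (metis dvdE mult_eq_0_iff poly_mult)
      hence "cmod a = 1 \<or> a = \<beta> \<or> a = \<beta>'" by (rule PCroot)
      moreover have "a \<noteq> \<beta>'" using rootsF0[OF that] nb by auto
      ultimately show ?thesis by blast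
    qed
    have bin: "\<beta> \<in> set as" using F0beta unfolding fac poly_linear_prod_zero .
    have c0: "poly f0 0 dvd 1"
    proof -
      from f0dvd obtain h where "Pk k = f0 * h" by (erule dvdE)
      hence "poly (Pk k) 0 = poly f0 0 * poly h 0" by simp
      thus ?thesis using Pk_coeff0[of k] by (metis dvd_triv_left)
    qed
    hence c1: "\<bar>poly f0 0\<bar> = 1" by (simp add: zdvd1_eq)
    have "poly F0 0 = of_int (poly f0 0)" unfolding F0_def by (simp add: of_int_hom.poly_map_poly_0)
    hence "cmod (poly F0 0) = 1" using c1
      by (metis norm_of_int of_int_1 of_int_abs)
    hence P1: "(\<Prod>a\<leftarrow>as. cmod a) = 1" unfolding fac poly_linear_prod_0 norm_prod_neg .
    have b01: "\<forall>a\<in>set as. 0 \<le> cmod a \<and> cmod a \<le> 1"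
    proof
      fix a assume "a \<in> set as"
      thus "0 \<le> cmod a \<and> cmod a \<le> 1" using vals[of a] alpha_range unfolding \<beta>_def by auto
    qed
    have "(\<Prod>a\<leftarrow>as. cmod a) \<le> cmod \<beta>" by (rule prod_list_le_elem[OF b01 bin])
    also have "cmod \<beta> = \<alpha>" unfolding \<beta>_def using alpha_range by simp
    finally show False using P1 alpha_range by simp
  qed
  have res1: "poly (map_poly (of_int :: int \<Rightarrow> real) (fs ! 0)) (1 / \<alpha>) = 0"
    using part1 unfolding F0_def \<beta>'_def poly_of_int_of_real f0 by simp
  have res2: "\<exists>n>0. z ^ n = 1"
    if i: "1 \<le> i" "i < length fs" and z: "poly (map_poly (of_int :: int \<Rightarrow> complex) (fs ! i)) z = 0" for i z
  proof -
    obtain i' where i': "i = Suc i'" using i by (cases i) auto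
    define fi where "fi = fs ! i"
    have fiin: "fi \<in> set rest" unfolding fi_def fs i' using i i' fs by simp
    have moni: "lead_coeff fi = 1" using monic_irr fiin unfolding fs by simp
    have "fi dvd prod_list rest" using fiin by (rule prod_list_dvd)
    hence "f0 * fi dvd Pk k" unfolding prodfs by simp
    hence dvd2: "F0 * map_poly of_int fi dvd PC" unfolding F0_def PC_def
      using map_dvd_of_int by (metis of_int_poly_hom.hom_mult)
    define Fi where "Fi = map_poly (of_int :: int \<Rightarrow> complex) fi"
    have Finz: "Fi \<noteq> 0" unfolding Fi_def using moni by auto
    have notb: "poly Fi w \<noteq> 0" if "poly F0 w = 0" for w
    proof
      assume "poly Fi w = 0"
      have "Polynomial.order w F0 \<ge> 1" using that F0nz order_root by (metis less_one not_le)
      moreover have "Polynomial.order w Fi \<ge> 1" using \<open>poly Fi w = 0\<close> Finz order_root by (metis less_one not_le)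
      moreover have "Polynomial.order w (F0 * Fi) = Polynomial.order w F0 + Polynomial.order w Fi" using F0nz Finz by (intro order_mult) simp
      moreover have "Polynomial.order w (F0 * Fi) \<le> Polynomial.order w PC"
        using dvd2 PCnz unfolding Fi_def by (intro dvd_imp_order_le) auto
      ultimately show False using ord1[of w] by simp
    qed
    have circ: "cmod w = 1" if "poly (map_poly of_int fi) w = 0" for w
    proof -
      have "poly PC w = 0" using that dvd2 unfolding Fi_def
        by (metis dvd_mult_right dvdE mult_eq_0_iff poly_mult)
      hence "cmod w = 1 \<or> w = \<beta> \<or> w = \<beta>'" by (rule PCroot)
      moreover have "w \<noteq> \<beta>" using notb[OF F0beta] that unfolding Fi_def by auto
      moreover have "w \<noteq> \<beta>'" using notb[OF part1] that unfolding Fi_def by auto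
      ultimately show ?thesis by blast
    qed
    show ?thesis using kronecker[OF moni circ] z unfolding fi_def by blast
  qed
  show ?thesis using res1 res2 by blast
qed

end
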